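(* For all $\Sigma\subseteq\mathsf{FOR}$ and $\varphi\in\mathsf{FOR}$: $\Sigma\vdash_{\mathcal{F}N}\varphi$ if and only if $\Sigma\vDash_{\mathsf{R}^n}\varphi$, where $\mathsf{R}^n$ is the set of Epstein relations $\mathfrak{R}$ such that for all $\varphi,\psi$, $\langle\neg\varphi,\psi\rangle\in\mathfrak{R}$ implies $\langle\varphi,\psi\rangle\in\mathfrak{R}$.
   Context: Language: propositional letters $\Phi=\{p_0,p_1,\dots\}$; connectives $\neg$, $\lor,\wedge,\to,\leftrightarrow,\vartriangle,\looparrowright$; $\mathsf{FOR}$ the set of all formulas. An Epstein model is $\langle v,\mathfrak{R}\rangle$ with $v:\Phi\to\{0,1\}$ and $\mathfrak{R}\subseteq\mathsf{FOR}^2$ (an Epstein relation); truth: letters via $v$, boolean connectives classical, $\langle v,\mathfrak{R}\rangle\vDash\varphi\vartriangle\psi$ iff both true and $\langle\varphi,\psi\rangle\in\mathfrak{R}$; $\langle v,\mathfrak{R}\rangle\vDash\varphi\looparrowright\psi$ iff $\varphi\to\psi$ true and $\langle\varphi,\psi\rangle\in\mathfrak{R}$. For a set $\mathsf{R}$ of relations, $\Sigma\vDash_{\mathsf{R}}\varphi$ iff for every $\mathfrak{R}\in\mathsf{R}$ and every valuation $v$, if $\langle v,\mathfrak{R}\rangle$ satisfies all of $\Sigma$ then it satisfies $\varphi$. $\mathcal{F}$ is the least set containing all classical tautologies of the language and the axioms $(p\looparrowright q)\to(p\to q)$ and $(p\vartriangle q)\leftrightarrow((p\looparrowright q)\wedge(p\wedge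 q))$, closed under uniform substitution and modus ponens. $\mathcal{F}N$ is the least set containing $\mathcal{F}$ and the axioms $(n1)\ (\neg p\looparrowright q)\to((p\looparrowright q)\lor\neg(p\to q))$ and $(n2)\ ((\neg\neg p\looparrowright q)\wedge\neg(\neg p\to q))\to(p\looparrowright q)$ ($p,q$ distinct letters), closed under uniform substitution and modus ponens. $\Sigma\vdash_{\mathcal{F}N}\varphi$ iff there is a finite sequence ending in $\varphi$ each member of which is in $\mathcal{F}N\cup\Sigma$ or follows from two earlier members by modus ponens. *)

theory Defs
  imports Main
begin

datatype form =
    Atom nat
  | Neg form
  | Or form form
  | And form form
  | Imp form form
  | Iff form form
  | Tri form form
  | Loop form form

type_synonym erel = "(form \<times> form) set"

fun sat :: "(nat \<Rightarrow> bool) \<Rightarrow> erel \<Rightarrow> form \<Rightarrow> bool" where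
  "sat v R (Atom n) = v n"
| "sat v R (Neg a) = (\<not> sat v R a)"
| "sat v R (Or a b) = (sat v R a \<or> sat v R b)"
| "sat v R (And a b) = (sat v R a \<and> sat v R b)"
| "sat v R (Imp a b) = (sat v R a \<longrightarrow> sat v R b)"
| "sat v R (Iff a b) = (sat v R a \<longleftrightarrow> sat v R b)"
| "sat v R (Tri a b) = (sat v R a \<and> sat v R b \<and> (a, b) \<in> R)"
| "sat v R (Loop a b) = ((sat v R a \<longrightarrow> sat v R b) \<and> (a, b) \<in> R)"

definition sem_conseq :: "erel set \<Rightarrow> form set \<Rightarrow> form \<Rightarrow> bool" where
  "sem_conseq Rs \<Sigma> \<phi> \<longleftrightarrow>
     (\<forall>R \<in> Rs. \<forall>v. (\<forall>\<sigma> \<in> \<Sigma>. sat v R \<sigma>) \<longrightarrow> sat v R \<phi>)"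

definition Rn :: "erel set" where
  "Rn = {R. \<forall>\<phi> \<psi>. (Neg \<phi>, \<psi>) \<in> R \<longrightarrow> (\<phi>, \<psi>) \<in> R}"

fun bval :: "(form \<Rightarrow> bool) \<Rightarrow> form \<Rightarrow> bool" where
  "bval I (Atom n) = I (Atom n)"
| "bval I (Neg a) = (\<not> bval I a)"
| "bval I (Or a b) = (bval I a \<or> bval I b)"
| "bval I (And a b) = (bval I a \<and> bval I b)"
| "bval I (Imp a b) = (bval I a \<longrightarrow> bval I b)"
| "bval I (Iff a b) = (bval I a \<longleftrightarrow> bval I b)"
| "bval I (Tri a b) = I (Tri a b)"
| "bval I (Loop a b) = I (Loop a b)"

definition tautology :: "form \<Rightarrow> bool" where
  "tautology \<phi> \<longleftrightarrow> (\<forall>I. bval I \<phi>)"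

fun subst :: "(nat \<Rightarrow> form) \<Rightarrow> form \<Rightarrow> form" where
  "subst s (Atom n) = s n"
| "subst s (Neg a) = Neg (subst s a)"
| "subst s (Or a b) = Or (subst s a) (subst s b)"
| "subst s (And a b) = And (subst s a) (subst s b)"
| "subst s (Imp a b) = Imp (subst s a) (subst s b)"
| "subst s (Iff a b) = Iff (subst s a) (subst s b)"
| "subst s (Tri a b) = Tri (subst s a) (subst s b)"
| "subst s (Loop a b) = Loop (subst s a) (subst s b)"

abbreviation p :: form where "p \<equiv> Atom 0"
abbreviation q :: form where "q \<equiv> Atom 1"

definition axF1 :: form where "axF1 = Imp (Loop p q) (Imp p q)"
definition axF2 :: form where "axF2 = Iff (Tri p q) (And (Loop p q) (And p q))"
definition axN1 :: form where "axN1 = Imp (Loop (Neg p) q) (Or (Loop p q) (Neg (Imp p q)))"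
definition axN2 :: form where
  "axN2 = Imp (And (Loop (Neg (Neg p)) q) (Neg (Imp (Neg p) q))) (Loop p q)"

inductive_set FN :: "form set" where
  taut: "tautology \<phi> \<Longrightarrow> \<phi> \<in> FN"
| F1: "axF1 \<in> FN"
| F2: "axF2 \<in> FN"
| N1: "axN1 \<in> FN"
| N2: "axN2 \<in> FN"
| US: "\<phi> \<in> FN \<Longrightarrow> subst s \<phi> \<in> FN"
| MP: "\<phi> \<in> FN \<Longrightarrow> Imp \<phi> \<psi> \<in> FN \<Longrightarrow> \<psi> \<in> FN"

definition derivable :: "form set \<Rightarrow> form \<Rightarrow> bool" where
  "derivable \<Sigma> \<phi> \<longleftrightarrow>
     (\<exists>xs. xs \<noteq> [] \<and> last xs = \<phi> \<and>
        (\<forall>i < length xs. xs ! i \<in> FN \<union> \<Sigma> \<or>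
           (\<exists>j < i. \<exists>k < i. xs ! k = Imp (xs ! j) (xs ! i))))"

end

theory Submission
  imports Defs
begin

inductive der :: "form set \<Rightarrow> form \<Rightarrow> bool" for G where
  ax: "\<phi> \<in> FN \<Longrightarrow> der G \<phi>"
| hyp: "\<phi> \<in> G \<Longrightarrow> der G \<phi>"
| mp: "der G a \<Longrightarrow> der G (Imp a b) \<Longrightarrow> der G b"

definition ok :: "form set \<Rightarrow> form list \<Rightarrow> bool" where
  "ok S xs \<longleftrightarrow> (\<forall>i < length xs. xs ! i \<in> FN \<union> S \<or>
           (\<exists>j < i. \<exists>k < i. xs ! k = Imp (xs ! j) (xs ! i)))"

lemma ok_append: assumes "ok S xs" "ok S ys" shows "ok S (xs @ ys)"
  unfolding ok_def
proof (intro allI impI)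
  fix i assume i: "i < length (xs @ ys)"
  show "(xs @ ys) ! i \<in> FN \<union> S \<or> (\<exists>j<i. \<exists>k<i. (xs @ ys) ! k = Imp ((xs @ ys) ! j) ((xs @ ys) ! i))"
  proof (cases "i < length xs")
    case True
    then show ?thesis using assms(1) unfolding ok_def
      by (smt (verit) nth_append order.strict_trans)
  next
    case False
    define i' where "i' = i - length xs"
    have ii: "i = length xs + i'" "i' < length ys" using False i i'_def by auto
    have e: "\<And>m. (xs @ ys) ! (length xs + m) = ys ! m" by (simp add: nth_append)
    from assms(2) ii(2) have "ys ! i' \<in> FN \<union> S \<or> (\<exists>j<i'. \<exists>k<i'. ys ! k = Imp (ys ! j) (ys ! i'))"
      unfolding ok_def by blast
    then show ?thesis
    proof
      assume "ys ! i' \<in> FN \<union> S" then show ?thesis using ii e by metis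
    next
      assume "\<exists>j<i'. \<exists>k<i'. ys ! k = Imp (ys ! j) (ys ! i')"
      then obtain j k where "j < i'" "k < i'" "ys ! k = Imp (ys ! j) (ys ! i')" by blast
      then show ?thesis using ii e
        by (metis add_less_cancel_left)
    qed
  qed
qed

lemma ok_snoc: assumes "ok S xs" "a \<in> set xs" "Imp a b \<in> set xs" shows "ok S (xs @ [b])"
  unfolding ok_def
proof (intro allI impI)
  fix i assume i: "i < length (xs @ [b])"
  show "(xs @ [b]) ! i \<in> FN \<union> S \<or> (\<exists>j<i. \<exists>k<i. (xs @ [b]) ! k = Imp ((xs @ [b]) ! j) ((xs @ [b]) ! i))"
  proof (cases "i < length xs")
    case True
    then show ?thesis using assms(1) unfolding ok_def
      by (smt (verit) nth_append order.strict_trans)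
  next
    case False
    then have ii: "i = length xs" using i by auto
    obtain j where j: "j < length xs" "xs ! j = a" using assms(2) by (metis in_set_conv_nth)
    obtain k where k: "k < length xs" "xs ! k = Imp a b" using assms(3) by (metis in_set_conv_nth)
    show ?thesis using j k ii by (metis nth_append nth_append_length)
  qed
qed

lemma der_derivable: "der G \<phi> \<Longrightarrow> \<exists>xs. xs \<noteq> [] \<and> last xs = \<phi> \<and> ok G xs"
proof (induction rule: der.induct)
  case (ax \<phi>) then show ?case by (intro exI[of _ "[\<phi>]"]) (auto simp: ok_def)
next
  case (hyp \<phi>) then show ?case by (intro exI[of _ "[\<phi>]"]) (auto simp: ok_def)
next
  case (mp a b)
  then obtain xs ys where xs: "xs \<noteq> []" "last xs = a" "ok G xs"
    and ys: "ys \<noteq> []" "last ys = Imp a b" "ok G ys" by blast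
  have "ok G ((xs @ ys) @ [b])"
  proof (rule ok_snoc[where a=a])
    show "ok G (xs @ ys)" using xs ys ok_append by blast
    show "a \<in> set (xs @ ys)" using xs by auto
    show "Imp a b \<in> set (xs @ ys)" using ys by (metis Un_iff last_in_set set_append)
  qed
  then show ?case by (intro exI[of _ "(xs @ ys) @ [b]"]) auto
qed

lemma derivable_der: assumes "xs \<noteq> []" "ok G xs" shows "der G (last xs)"
proof -
  have "\<forall>i < length xs. der G (xs ! i)"
  proof (intro allI)
    fix i show "i < length xs \<longrightarrow> der G (xs ! i)"
    proof (induction i rule: less_induct)
      case (less i)
      show ?case
      proof
        assume i: "i < length xs"
        with assms(2) have "xs ! i \<in> FN \<union> G \<or> (\<exists>j<i. \<exists>k<i. xs ! k = Imp (xs ! j) (xs ! i))"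
          unfolding ok_def by blast
        then show "der G (xs ! i)"
        proof
          assume "xs ! i \<in> FN \<union> G" then show ?thesis by (auto intro: der.intros)
        next
          assume "\<exists>j<i. \<exists>k<i. xs ! k = Imp (xs ! j) (xs ! i)"
          then obtain j k where "j<i" "k<i" "xs ! k = Imp (xs ! j) (xs ! i)" by blast
          then show ?thesis using less i by (metis der.mp order.strict_trans)
        qed
      qed
    qed
  qed
  then show ?thesis using assms(1) by (simp add: last_conv_nth)
qed

lemma derivable_iff: "derivable S \<phi> \<longleftrightarrow> der S \<phi>"
  unfolding derivable_def using der_derivable derivable_der unfolding ok_def by metis


section \<open>Soundness\<close>

lemma sat_subst:
  "sat v R (subst s \<phi>) = sat (\<lambda>n. sat v R (s n)) {(a,b). (subst s a, subst s b) \<in> R} \<phi>"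
  by (induction \<phi>) auto

lemma bval_sat: "bval (sat v R) \<phi> = sat v R \<phi>"
  by (induction \<phi>) auto

lemma FN_sound: "\<phi> \<in> FN \<Longrightarrow> R \<in> Rn \<Longrightarrow> sat v R \<phi>"
proof (induction arbitrary: v R rule: FN.induct)
  case (taut \<phi>) then show ?case by (metis bval_sat tautology_def)
next
  case F1 then show ?case by (auto simp: axF1_def)
next
  case F2 then show ?case by (auto simp: axF2_def)
next
  case N1 then show ?case by (auto simp: axN1_def Rn_def)
next
  case N2 then show ?case by (auto simp: axN2_def Rn_def)
next
  case (US \<phi> s)
  have "{(a,b). (subst s a, subst s b) \<in> R} \<in> Rn" using US.prems by (auto simp: Rn_def)
  then show ?case using US.IH by (simp add: sat_subst)
next
  case (MP \<phi> \<psi>) then show ?case by fastforce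
qed

lemma der_sound: "der S \<phi> \<Longrightarrow> R \<in> Rn \<Longrightarrow> \<forall>\<sigma>\<in>S. sat v R \<sigma> \<Longrightarrow> sat v R \<phi>"
  by (induction rule: der.induct) (auto simp: FN_sound)

lemma der_mono: "der G \<phi> \<Longrightarrow> G \<subseteq> H \<Longrightarrow> der H \<phi>"
  by (induction rule: der.induct) (auto intro: der.intros)

lemma der_finite: "der G \<phi> \<Longrightarrow> \<exists>G0. finite G0 \<and> G0 \<subseteq> G \<and> der G0 \<phi>"
proof (induction rule: der.induct)
  case (ax \<phi>) then show ?case by (intro exI[of _ "{}"]) (auto intro: der.intros)
next
  case (hyp \<phi>) then show ?case by (intro exI[of _ "{\<phi>}"]) (auto intro: der.intros)
next
  case (mp a b)
  then obtain G1 G2 where "finite G1" "G1 \<subseteq> G" "der G1 a" "finite G2" "G2 \<subseteq> G" "der G2 (Imp a b)"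
    by blast
  then show ?case
    by (intro exI[of _ "G1 \<union> G2"]) (meson der.mp der_mono finite_UnI sup.cobounded1 sup.cobounded2 le_supI)
qed

lemma der_taut: "tautology t \<Longrightarrow> der G t"
  by (intro der.ax FN.taut)

lemma deduction: "der (insert a G) b \<Longrightarrow> der G (Imp a b)"
proof (induction rule: der.induct)
  case (ax \<phi>)
  have "tautology (Imp \<phi> (Imp a \<phi>))" by (simp add: tautology_def)
  then show ?case using ax by (meson der.ax der.mp der_taut)
next
  case (hyp \<phi>)
  show ?case
  proof (cases "\<phi> = a")
    case True
    have "tautology (Imp a a)" by (simp add: tautology_def)
    then show ?thesis using True der_taut by simp
  next
    case False
    then have "der G \<phi>" using hyp by (auto intro: der.hyp)
    moreover have "tautology (Imp \<phi> (Imp a \<phi>))" by (simp add: tautology_def)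
    ultimately show ?thesis by (meson der.mp der_taut)
  qed
next
  case (mp c d)
  have "tautology (Imp (Imp a (Imp c d)) (Imp (Imp a c) (Imp a d)))" by (simp add: tautology_def)
  then show ?case using mp by (meson der.mp der_taut)
qed

locale mcs =
  fixes G :: "form set"
  assumes closed: "der G \<psi> \<Longrightarrow> \<psi> \<in> G"
    and neg: "Neg \<psi> \<in> G \<longleftrightarrow> \<psi> \<notin> G"
begin

lemma taut1: "tautology (Imp x y) \<Longrightarrow> x \<in> G \<Longrightarrow> y \<in> G"
  by (rule closed, rule der.mp[OF der.hyp der_taut])

lemma taut2: "tautology (Imp x (Imp y z)) \<Longrightarrow> x \<in> G \<Longrightarrow> y \<in> G \<Longrightarrow> z \<in> G"
  by (rule closed, rule der.mp[OF der.hyp der.mp[OF der.hyp der_taut]])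

lemma inFN: "x \<in> FN \<Longrightarrow> x \<in> G"
  by (rule closed, rule der.ax)

lemma imp_mem: "Imp x y \<in> G \<longleftrightarrow> (x \<in> G \<longrightarrow> y \<in> G)"
proof
  assume h: "Imp x y \<in> G" show "x \<in> G \<longrightarrow> y \<in> G"
  proof
    assume "x \<in> G" then show "y \<in> G" by (rule closed[OF der.mp[OF der.hyp der.hyp[OF h]]])
  qed
next
  assume h: "x \<in> G \<longrightarrow> y \<in> G"
  show "Imp x y \<in> G"
  proof (cases "x \<in> G")
    case True then have y: "y \<in> G" using h by blast
    show ?thesis by (rule taut1[OF _ y]) (simp add: tautology_def)
  next
    case False then have nx: "Neg x \<in> G" using neg by simp
    show ?thesis by (rule taut1[OF _ nx]) (simp add: tautology_def)
  qed
qed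

lemma or_mem: "Or x y \<in> G \<longleftrightarrow> (x \<in> G \<or> y \<in> G)"
proof
  assume h: "Or x y \<in> G" show "x \<in> G \<or> y \<in> G"
  proof (rule ccontr)
    assume "\<not> (x \<in> G \<or> y \<in> G)"
    then have nx: "Neg x \<in> G" and "y \<notin> G" using neg by auto
    moreover have "y \<in> G" by (rule taut2[OF _ h nx]) (simp add: tautology_def)
    ultimately show False by simp
  qed
next
  assume "x \<in> G \<or> y \<in> G" then show "Or x y \<in> G"
  proof
    assume x: "x \<in> G" show ?thesis by (rule taut1[OF _ x]) (simp add: tautology_def)
  next
    assume y: "y \<in> G" show ?thesis by (rule taut1[OF _ y]) (simp add: tautology_def)
  qed
qed

lemma and_mem: "And x y \<in> G \<longleftrightarrow> (x \<in> G \<and> y \<in> G)"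
proof
  assume h: "And x y \<in> G" show "x \<in> G \<and> y \<in> G"
  proof
    show "x \<in> G" by (rule taut1[OF _ h]) (simp add: tautology_def)
    show "y \<in> G" by (rule taut1[OF _ h]) (simp add: tautology_def)
  qed
next
  assume h: "x \<in> G \<and> y \<in> G"
  then have x: "x \<in> G" and y: "y \<in> G" by auto
  show "And x y \<in> G" by (rule taut2[OF _ x y]) (simp add: tautology_def)
qed

lemma iff_mem: "Iff x y \<in> G \<longleftrightarrow> (x \<in> G \<longleftrightarrow> y \<in> G)"
proof
  assume h: "Iff x y \<in> G"
  have "Imp x y \<in> G" by (rule taut1[OF _ h]) (simp add: tautology_def)
  moreover have "Imp y x \<in> G" by (rule taut1[OF _ h]) (simp add: tautology_def)
  ultimately show "x \<in> G \<longleftrightarrow> y \<in> G" using imp_mem by blast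
next
  assume h: "x \<in> G \<longleftrightarrow> y \<in> G"
  show "Iff x y \<in> G"
  proof (cases "x \<in> G")
    case True then have x: "x \<in> G" and y: "y \<in> G" using h by auto
    show ?thesis by (rule taut2[OF _ x y]) (simp add: tautology_def)
  next
    case False then have x: "Neg x \<in> G" and y: "Neg y \<in> G" using h neg by auto
    show ?thesis by (rule taut2[OF _ x y]) (simp add: tautology_def)
  qed
qed

definition val :: "nat \<Rightarrow> bool" where "val n \<longleftrightarrow> Atom n \<in> G"
definition rel :: erel where
  "rel = {(a,b). Loop a b \<in> G \<or> (Imp a b \<notin> G \<and> Loop (Neg a) b \<in> G)}"

lemma inst: "subst (\<lambda>n. if n = 0 then a else b) (Atom 0) = a"
  "subst (\<lambda>n. if n = 0 then a else b) (Atom 1) = b" by auto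

lemma F1i: "Imp (Loop a b) (Imp a b) \<in> G"
  using inFN[OF FN.US[OF FN.F1, of "\<lambda>n. if n = 0 then a else b"]] by (simp add: axF1_def)
lemma F2i: "Iff (Tri a b) (And (Loop a b) (And a b)) \<in> G"
  using inFN[OF FN.US[OF FN.F2, of "\<lambda>n. if n = 0 then a else b"]] by (simp add: axF2_def)
lemma N1i: "Imp (Loop (Neg a) b) (Or (Loop a b) (Neg (Imp a b))) \<in> G"
  using inFN[OF FN.US[OF FN.N1, of "\<lambda>n. if n = 0 then a else b"]] by (simp add: axN1_def)
lemma N2i: "Imp (And (Loop (Neg (Neg a)) b) (Neg (Imp (Neg a) b))) (Loop a b) \<in> G"
  using inFN[OF FN.US[OF FN.N2, of "\<lambda>n. if n = 0 then a else b"]] by (simp add: axN2_def)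

lemma rel_Rn: "rel \<in> Rn"
  unfolding Rn_def
proof (intro CollectI allI impI)
  fix a b assume "(Neg a, b) \<in> rel"
  then have "Loop (Neg a) b \<in> G \<or> (Imp (Neg a) b \<notin> G \<and> Loop (Neg (Neg a)) b \<in> G)"
    by (simp add: rel_def)
  then show "(a, b) \<in> rel"
  proof
    assume h: "Loop (Neg a) b \<in> G"
    then have "Loop a b \<in> G \<or> Neg (Imp a b) \<in> G" using N1i[of a b] imp_mem or_mem by blast
    then show ?thesis using h neg by (auto simp: rel_def)
  next
    assume h: "Imp (Neg a) b \<notin> G \<and> Loop (Neg (Neg a)) b \<in> G"
    then have "And (Loop (Neg (Neg a)) b) (Neg (Imp (Neg a) b)) \<in> G" using neg and_mem by blast
    then have "Loop a b \<in> G" using N2i[of a b] imp_mem by blast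
    then show ?thesis by (auto simp: rel_def)
  qed
qed

lemma truth: "sat val rel \<psi> \<longleftrightarrow> \<psi> \<in> G"
proof (induction \<psi>)
  case (Atom n) then show ?case by (simp add: val_def)
next
  case (Neg \<psi>) then show ?case using neg by simp
next
  case (Or \<psi>1 \<psi>2) then show ?case using or_mem by simp
next
  case (And \<psi>1 \<psi>2) then show ?case using and_mem by simp
next
  case (Imp \<psi>1 \<psi>2) then show ?case using imp_mem by simp
next
  case (Iff \<psi>1 \<psi>2) then show ?case using iff_mem by simp
next
  case (Tri a b)
  have t: "Tri a b \<in> G \<longleftrightarrow> Loop a b \<in> G \<and> a \<in> G \<and> b \<in> G"
    using iff_mem[THEN iffD1, OF F2i[of a b]] by (simp only: and_mem)
  have r: "(a,b) \<in> rel \<longleftrightarrow> Loop a b \<in> G" if "b \<in> G"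
  proof -
    have "Imp a b \<in> G" using that imp_mem[of a b] by blast
    then show ?thesis by (simp add: rel_def)
  qed
  have "sat val rel (Tri a b) \<longleftrightarrow> a \<in> G \<and> b \<in> G \<and> (a,b) \<in> rel"
    by (simp only: sat.simps Tri.IH)
  then show ?case using t r by blast
next
  case (Loop a b)
  have f1: "Loop a b \<in> G \<Longrightarrow> Imp a b \<in> G" using imp_mem[THEN iffD1, OF F1i[of a b]] by blast
  have s: "sat val rel (Loop a b) \<longleftrightarrow> Imp a b \<in> G \<and> (a,b) \<in> rel"
    using imp_mem[of a b] by (simp only: sat.simps Loop.IH)
  show ?case
  proof (cases "Imp a b \<in> G")
    case True
    then have "(a,b) \<in> rel \<longleftrightarrow> Loop a b \<in> G" by (simp add: rel_def)
    then show ?thesis using s True by blast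
  next
    case False then show ?thesis using s f1 by blast
  qed
qed

end

lemma completeness:
  assumes nd: "\<not> der S \<phi>"
  shows "\<exists>R \<in> Rn. \<exists>v. (\<forall>\<sigma>\<in>S. sat v R \<sigma>) \<and> \<not> sat v R \<phi>"
proof -
  define A where "A = {G. S \<subseteq> G \<and> \<not> der G \<phi>}"
  have "\<forall>C\<in>chains A. \<exists>U\<in>A. \<forall>X\<in>C. X \<subseteq> U"
  proof
    fix C assume C: "C \<in> chains A"
    have CA: "C \<subseteq> A" using C unfolding chains_def by blast
    show "\<exists>U\<in>A. \<forall>X\<in>C. X \<subseteq> U"
    proof (cases "C = {}")
      case True
      have "S \<in> A" using nd unfolding A_def by blast
      then show ?thesis using True by blast
    next
      case False
      obtain X where X: "X \<in> C" using False by blast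
      then have "S \<subseteq> X" using CA unfolding A_def by blast
      then have sub: "S \<subseteq> \<Union>C" using X by blast
      have "\<not> der (\<Union>C) \<phi>"
      proof
        assume "der (\<Union>C) \<phi>"
        then obtain G0 where G0: "finite G0" "G0 \<subseteq> \<Union>C" "der G0 \<phi>" using der_finite by blast
        have "subset.chain A C" using C by (simp add: chains_alt_def)
        then obtain B where "B \<in> C" "G0 \<subseteq> B"
          using finite_subset_Union_chain[OF G0(1) G0(2) False] by blast
        then have "der B \<phi>" using G0(3) der_mono by blast
        moreover have "B \<in> A" using \<open>B \<in> C\<close> CA by blast
        ultimately show False unfolding A_def by blast
      qed
      then have "\<Union>C \<in> A" using sub unfolding A_def by blast
      then show ?thesis by blast
    qed
  qed
  then have "\<exists>M\<in>A. \<forall>X\<in>A. M \<subseteq> X \<longrightarrow> X = M" by (rule Zorn_Lemma2)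
  then obtain G where G: "G \<in> A" and max0: "\<forall>X\<in>A. G \<subseteq> X \<longrightarrow> X = G"
    by (elim bexE) (rule that)
  have max: "\<And>X. X \<in> A \<Longrightarrow> G \<subseteq> X \<Longrightarrow> X = G" using max0 by simp
  have SG: "S \<subseteq> G" and nG: "\<not> der G \<phi>" using G by (auto simp: A_def)
  have ins: "\<psi> \<notin> G \<Longrightarrow> der G (Imp \<psi> \<phi>)" for \<psi>
  proof -
    assume "\<psi> \<notin> G"
    then have "insert \<psi> G \<notin> A" using max[of "insert \<psi> G"] by blast
    then have "der (insert \<psi> G) \<phi>" using SG by (auto simp: A_def)
    then show ?thesis by (rule deduction)
  qed
  have closed: "der G \<psi> \<Longrightarrow> \<psi> \<in> G" for \<psi>
  proof (rule ccontr)
    assume "der G \<psi>" "\<psi> \<notin> G"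
    then have "der G \<phi>" using der.mp[OF _ ins] by blast
    then show False using nG by simp
  qed
  have neg: "Neg \<psi> \<in> G \<longleftrightarrow> \<psi> \<notin> G" for \<psi>
  proof
    assume "Neg \<psi> \<in> G"
    moreover have "tautology (Imp \<psi> (Imp (Neg \<psi>) \<phi>))" by (simp add: tautology_def)
    ultimately show "\<psi> \<notin> G" using nG der.mp[OF der.hyp der.mp[OF der.hyp der_taut]] by blast
  next
    assume h: "\<psi> \<notin> G"
    show "Neg \<psi> \<in> G"
    proof (rule ccontr)
      assume "Neg \<psi> \<notin> G"
      then have "der G (Imp (Neg \<psi>) \<phi>)" "der G (Imp \<psi> \<phi>)" using ins h by auto
      moreover have "tautology (Imp (Imp \<psi> \<phi>) (Imp (Imp (Neg \<psi>) \<phi>) \<phi>))" by (auto simp: tautology_def)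
      ultimately show False using nG der.mp[OF _ der.mp[OF _ der_taut]] by blast
    qed
  qed
  interpret mcs G by unfold_locales (rule closed, assumption, rule neg)
  have "\<phi> \<notin> G" using nG der.hyp by blast
  then have "(\<forall>\<sigma>\<in>S. sat val rel \<sigma>) \<and> \<not> sat val rel \<phi>"
    using SG by (auto simp: truth)
  then show ?thesis using rel_Rn by blast
qed

theorem mainTheorem17:
  fixes \<Sigma> :: "form set" and \<phi> :: form
  shows "derivable \<Sigma> \<phi> \<longleftrightarrow> sem_conseq Rn \<Sigma> \<phi>"
  unfolding derivable_iff sem_conseq_def
proof
  assume "der \<Sigma> \<phi>" then show "\<forall>R\<in>Rn. \<forall>v. (\<forall>\<sigma>\<in>\<Sigma>. sat v R \<sigma>) \<longrightarrow> sat v R \<phi>"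
    using der_sound by blast
next
  assume h: "\<forall>R\<in>Rn. \<forall>v. (\<forall>\<sigma>\<in>\<Sigma>. sat v R \<sigma>) \<longrightarrow> sat v R \<phi>"
  show "der \<Sigma> \<phi>"
  proof (rule ccontr)
    assume "\<not> der \<Sigma> \<phi>"
    from completeness[OF this] obtain R v where "R \<in> Rn" "\<forall>\<sigma>\<in>\<Sigma>. sat v R \<sigma>" "\<not> sat v R \<phi>"
      by blast
    then show False using h by blast
  qed
qed

end
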